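(* Let $d\ge1$ and let $\mu$ be a Borel probability measure on $S^{d-1}$. Then \[ (\mu\otimes\mu)\bigl(\{(u,v)\in (S^{d-1})^2: u\perp v\}\bigr)\le \frac{d-1}{d}. \] Equivalently, two independent $\mu$-distributed unit vectors are non-orthogonal with probability at least $1/d$.
   Context: $S^{d-1}$ is the unit sphere in $\mathbb R^d$; $\mu\otimes\mu$ is the product measure on $(S^{d-1})^2$. *)

theory Defs
  imports "HOL-Probability.Probability"
begin

end

theory Submission
  imports Defs
begin

lemma sq_sum_le_card:
  fixes x :: "'b \<Rightarrow> real"
  assumes "finite I" "I \<noteq> {}"
  shows "(sum x I)^2 \<le> real (card I) * (\<Sum>i\<in>I. (x i)^2)"
proof -
  define n where "n = real (card I)"
  define s where "s = sum x I"
  have n: "n > 0" using assms by (simp add: n_def card_gt_0_iff)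
  define a where "a = s/n"
  have "0 \<le> (\<Sum>i\<in>I. (x i - a)^2)" by (intro sum_nonneg) auto
  also have "\<dots> = (\<Sum>i\<in>I. (x i)^2 - 2*a*x i + a^2)"
    by (intro sum.cong refl) (simp add: power2_diff algebra_simps)
  also have "\<dots> = (\<Sum>i\<in>I. (x i)^2) - 2 * a * s + n * a ^ 2"
    by (simp add: sum.distrib sum_subtractf sum_distrib_left[symmetric] s_def n_def)
  also have "\<dots> = (\<Sum>i\<in>I. (x i)^2) - 2 * (s/n) * s + n * (s/n)^2"
    by (simp add: a_def)
  also have "\<dots> = (\<Sum>i\<in>I. (x i)^2) - s^2 / n"
    using n by (simp add: field_simps power2_eq_square)
  finally have "s^2 / n \<le> (\<Sum>i\<in>I. (x i)^2)" by simp
  then show ?thesis using n by (simp add: s_def n_def field_simps)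
qed

lemma prod_int_sq:
  fixes \<mu> :: "'a measure" and h :: "'a \<Rightarrow> real"
  assumes P: "prob_space \<mu>"
    and hm: "h \<in> borel_measurable \<mu>" and hb: "\<And>x. \<bar>h x\<bar> \<le> K"
  shows "integrable (\<mu> \<Otimes>\<^sub>M \<mu>) (\<lambda>(u,v). h u * h v)"
    and "(\<integral>p. (case p of (u,v) \<Rightarrow> h u * h v) \<partial>(\<mu> \<Otimes>\<^sub>M \<mu>)) = (\<integral>u. h u \<partial>\<mu>)^2"
proof -
  interpret prob_space \<mu> by fact
  have hi: "integrable \<mu> h"
    using integrable_const_bound[where B=K and f=h] hm hb by auto
  interpret pair_prob_space \<mu> \<mu> by unfold_locales
  have K: "0 \<le> K" using hb[of undefined] by simp
  show int: "integrable (\<mu> \<Otimes>\<^sub>M \<mu>) (\<lambda>(u,v). h u * h v)"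
  proof (rule P.integrable_const_bound[where B="K*K"])
    show "AE x in \<mu> \<Otimes>\<^sub>M \<mu>. norm (case x of (u, v) \<Rightarrow> h u * h v) \<le> K * K"
      by (intro AE_I2) (auto simp: abs_mult intro!: mult_mono hb K)
    show "(\<lambda>(u, v). h u * h v) \<in> borel_measurable (\<mu> \<Otimes>\<^sub>M \<mu>)"
      using hm by measurable
  qed
  have "(\<integral>p. (case p of (u,v) \<Rightarrow> h u * h v) \<partial>(\<mu> \<Otimes>\<^sub>M \<mu>)) = (\<integral>x. (\<integral>y. h x * h y \<partial>\<mu>) \<partial>\<mu>)"
    using integral_fst[of "\<lambda>u v. h u * h v", OF int] by simp
  also have "\<dots> = (\<integral>x. h x * (\<integral>y. h y \<partial>\<mu>) \<partial>\<mu>)" by simp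
  also have "\<dots> = (\<integral>u. h u \<partial>\<mu>)^2" by (simp add: power2_eq_square)
  finally show "(\<integral>p. (case p of (u,v) \<Rightarrow> h u * h v) \<partial>(\<mu> \<Otimes>\<^sub>M \<mu>)) = (\<integral>u. h u \<partial>\<mu>)^2" .
qed


lemma sphere_borel[measurable]: "sphere (0::'a::euclidean_space) 1 \<in> sets borel"
  by (simp add: borel_closed)

theorem corollary1:
  fixes \<mu> :: "'a::euclidean_space measure"
  assumes "prob_space \<mu>"
    and "sets \<mu> = sets borel"
    and "measure \<mu> (sphere 0 1) = 1"
  shows "measure (\<mu> \<Otimes>\<^sub>M \<mu>)
           {(u, v). u \<in> sphere 0 1 \<and> v \<in> sphere 0 1 \<and> inner u v = 0}
         \<le> (real DIM('a) - 1) / real DIM('a)"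
proof -
  interpret prob_space \<mu> by fact
  interpret pair_prob_space \<mu> \<mu> by unfold_locales
  have fmu: "finite_measure \<mu>" using assms(1) by (simp add: prob_space_def)
  define S where "S = sphere (0::'a) 1"
  define A where "A = {(u, v). u \<in> sphere 0 1 \<and> v \<in> sphere (0::'a) 1 \<and> inner u v = 0}"
  define B where "B = {(u, v). u \<in> sphere 0 1 \<and> v \<in> sphere (0::'a) 1 \<and> inner u v \<noteq> 0}"
  define P where "P = \<mu> \<Otimes>\<^sub>M \<mu>"
  have sP: "sets P = sets (borel \<Otimes>\<^sub>M borel)"
    unfolding P_def by (rule sets_pair_measure_cong) (use assms(2) in auto)
  have A: "A \<in> sets P"
  proof -
    have "A = {p \<in> space (borel \<Otimes>\<^sub>M borel). fst p \<in> sphere 0 1 \<and> snd p \<in> sphere 0 1 \<and> inner (fst p) (snd p) = 0}"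
      by (auto simp: space_pair_measure A_def)
    also have "\<dots> \<in> sets (borel \<Otimes>\<^sub>M borel)" by measurable
    finally show ?thesis using sP by simp
  qed
  have B: "B \<in> sets P"
  proof -
    have "B = {p \<in> space (borel \<Otimes>\<^sub>M borel). fst p \<in> sphere 0 1 \<and> snd p \<in> sphere 0 1 \<and> inner (fst p) (snd p) \<noteq> 0}"
      by (auto simp: space_pair_measure B_def)
    also have "\<dots> \<in> sets (borel \<Otimes>\<^sub>M borel)" by measurable
    finally show ?thesis using sP by simp
  qed
  define f where "f b u = inner u b * indicator S u" for b u
  have fm: "(\<lambda>u. f b u * f c u) \<in> borel_measurable \<mu>" for b c
  proof -
    have "(\<lambda>u. f b u * f c u) \<in> borel_measurable borel"
      unfolding f_def S_def by measurable
    then show ?thesis using measurable_cong_sets[OF assms(2) refl] by blast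
  qed
  have fb: "\<bar>f b u\<bar> \<le> 1" if "b \<in> Basis" for b u
  proof (cases "u \<in> S")
    case True
    then have "\<bar>inner u b\<bar> \<le> norm u * norm b" by (rule_tac Cauchy_Schwarz_ineq2)
    with True that show ?thesis by (simp add: f_def S_def)
  qed (simp add: f_def)
  have fb2: "\<bar>f b u * f c u\<bar> \<le> 1" if "b \<in> Basis" "c \<in> Basis" for b c u
    using fb[OF that(1), of u] fb[OF that(2), of u]
    by (simp add: abs_mult mult_le_one)
  define m where "m b c = (\<integral>u. f b u * f c u \<partial>\<mu>)" for b c
  define g where "g = (\<lambda>(u,v). \<Sum>b\<in>Basis. \<Sum>c\<in>Basis. (f b u * f c u) * (f b v * f c v))"
  have gint: "integrable P g"
    unfolding g_def P_def case_prod_beta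
    apply (rule Bochner_Integration.integrable_sum)
    apply (rule Bochner_Integration.integrable_sum)
    subgoal for b c using prod_int_sq(1)[OF assms(1) fm fb2, of b c] by (simp add: case_prod_unfold)
    done
  have tint: "integrable P (\<lambda>p. f b (fst p) * f c (fst p) * (f b (snd p) * f c (snd p)))"
    if "b \<in> Basis" "c \<in> Basis" for b c
    using prod_int_sq(1)[OF assms(1) fm fb2[OF that]] by (simp add: case_prod_unfold P_def)
  have tval: "integral\<^sup>L P (\<lambda>p. f b (fst p) * f c (fst p) * (f b (snd p) * f c (snd p))) = (m b c)^2"
    if "b \<in> Basis" "c \<in> Basis" for b c
    using prod_int_sq(2)[OF assms(1) fm fb2[OF that]] by (simp add: case_prod_unfold P_def m_def)
  have gval: "integral\<^sup>L P g = (\<Sum>b\<in>Basis. \<Sum>c\<in>Basis. (m b c)^2)"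
    unfolding g_def case_prod_beta
    apply (subst Bochner_Integration.integral_sum)
    apply (rule Bochner_Integration.integrable_sum, erule (1) tint)
    apply (intro sum.cong refl)
    apply (subst Bochner_Integration.integral_sum)
     apply (erule (1) tint)
    apply (intro sum.cong refl)
    apply (erule (1) tval)
    done
  have inner_exp: "(\<Sum>b\<in>Basis. f b u * f b v) = inner u v * indicator S u * indicator S v" for u v
    by (cases "u \<in> S"; cases "v \<in> S") (simp_all add: f_def euclidean_inner[of u v])
  have gform: "g (u,v) = (inner u v * indicator S u * indicator S v)^2" for u v
  proof -
    have "g (u,v) = (\<Sum>b\<in>Basis. f b u * f b v) * (\<Sum>c\<in>Basis. f c u * f c v)"
      by (simp add: g_def sum_product algebra_simps)
    then show ?thesis by (simp add: inner_exp power2_eq_square)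
  qed
  have gle: "g p \<le> indicator B p" for p
  proof (cases p)
    case (Pair u v)
    show ?thesis
    proof (cases "u \<in> S \<and> v \<in> S \<and> inner u v \<noteq> 0")
      case True
      then have "\<bar>inner u v\<bar> \<le> 1" using Cauchy_Schwarz_ineq2[of u v] by (simp add: S_def)
      then have "(inner u v)^2 \<le> 1" by (simp add: abs_square_le_1)
      with True show ?thesis by (simp add: Pair gform B_def S_def)
    next
      case False
      then show ?thesis by (auto simp: Pair gform B_def S_def indicator_def)
    qed
  qed
  interpret Q: prob_space P unfolding P_def by (rule prob_space_pair) unfold_locales
  have "integral\<^sup>L P g \<le> integral\<^sup>L P (indicator B)"
  proof (rule integral_mono[OF gint])
    show "integrable P (indicator B :: 'a \<times> 'a \<Rightarrow> real)"
      by (rule Bochner_Integration.integrable_real_indicator[OF B])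
        (simp add: Q.emeasure_finite less_top[symmetric])
  qed (use gle in auto)
  also have "\<dots> = measure P B" using B by simp
  finally have gB: "integral\<^sup>L P g \<le> measure P B" .
  have diag: "(\<Sum>b\<in>Basis. m b b) = 1"
  proof -
    have "(\<Sum>b\<in>Basis. m b b) = (\<integral>u. (\<Sum>b\<in>Basis. f b u * f b u) \<partial>\<mu>)"
      unfolding m_def
    proof (rule Bochner_Integration.integral_sum[symmetric])
      fix b :: 'a assume b: "b \<in> Basis"
      show "integrable \<mu> (\<lambda>u. f b u * f b u)"
        using finite_measure.integrable_const_bound[OF fmu, of "\<lambda>u. f b u * f b u" 1] fm[of b b] fb2[OF b b] by simp
    qed
    also have "\<dots> = (\<integral>u. indicator S u \<partial>\<mu>)"
    proof (intro Bochner_Integration.integral_cong refl)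
      fix u :: 'a
      show "(\<Sum>b\<in>Basis. f b u * f b u) = indicator S u"
        unfolding inner_exp by (cases "u \<in> S") (simp_all add: S_def dot_square_norm)
    qed
    also have "\<dots> = 1" using assms(2,3) by (simp add: S_def)
    finally show ?thesis .
  qed
  have "1 / real DIM('a) = (\<Sum>b\<in>Basis. m b b)^2 / real DIM('a)" using diag by simp
  also have "\<dots> \<le> (\<Sum>b\<in>Basis. (m b b)^2)"
    using sq_sum_le_card[of "Basis::'a set" "\<lambda>b. m b b"] by (simp add: field_simps)
  also have "\<dots> \<le> (\<Sum>b\<in>Basis. \<Sum>c\<in>Basis. (m b c)^2)"
    by (intro sum_mono member_le_sum) auto
  also have "\<dots> \<le> measure P B" using gval gB by simp
  finally have Bge: "1 / real DIM('a) \<le> measure P B" .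
  have "A \<inter> B = {}" by (auto simp: A_def B_def)
  then have "measure P A + measure P B = measure P (A \<union> B)"
    using A B by (simp add: Q.finite_measure_Union)
  also have "\<dots> \<le> 1" by (rule Q.prob_le_1)
  finally have "measure P A \<le> 1 - 1 / real DIM('a)" using Bge by simp
  also have "\<dots> = (real DIM('a) - 1) / real DIM('a)" by (simp add: field_simps)
  finally show ?thesis by (simp add: A_def P_def)
qed

end
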